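(* Suppose each $f_v$ is $K_v$-Lipschitz and let $\bar K=\frac1{rn}\sum_vK_v$. If $T$ is sampled uniformly from all subsets of $V(G)$ of size $pn$, then $|\mathbb E_T(\xi)|\le\frac{\bar K}{rn-1}$.
   Context: Let $n,p,q$ be positive integers, $r=p+q$, $G$ a finite simple graph with $|V(G)|=rn$ and no isolated vertices; $\mathcal N(v)$, $d(v)$ neighbor set and degree. For each $v$, $f_v:2^{\mathcal N(v)}\to\mathbb R$ with $f_v(\emptyset)=0$. $\sigma_T(v)=q$ if $v\in T$, $-p$ otherwise; for $|T|=pn$, $\xi=\frac1{pqn}\sum_v\sigma_T(v)f_v(T\cap\mathcal N(v))$. $f_v$ is $K_v$-Lipschitz ($K_v>0$) if $|f_v(A)-f_v(A')|\le K_v|A\triangle A'|/d(v)$ for all $A,A'\subseteq\mathcal N(v)$. *)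

theory Defs
  imports Complex_Main
begin

definition simple_graph :: "'a set \<Rightarrow> ('a \<Rightarrow> 'a \<Rightarrow> bool) \<Rightarrow> bool" where
  "simple_graph V E \<longleftrightarrow> finite V \<and> (\<forall>u v. E u v \<longrightarrow> E v u) \<and> (\<forall>v. \<not> E v v)
     \<and> (\<forall>u v. E u v \<longrightarrow> u \<in> V \<and> v \<in> V)"

definition nbhd :: "'a set \<Rightarrow> ('a \<Rightarrow> 'a \<Rightarrow> bool) \<Rightarrow> 'a \<Rightarrow> 'a set" where
  "nbhd V E v = {u \<in> V. E v u}"

definition deg :: "'a set \<Rightarrow> ('a \<Rightarrow> 'a \<Rightarrow> bool) \<Rightarrow> 'a \<Rightarrow> nat" where
  "deg V E v = card (nbhd V E v)"

definition lipschitz_loc :: "'a set \<Rightarrow> ('a \<Rightarrow> 'a \<Rightarrow> bool) \<Rightarrow> 'a \<Rightarrow> ('a set \<Rightarrow> real) \<Rightarrow> real \<Rightarrow> bool" where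
  "lipschitz_loc V E v g K \<longleftrightarrow> K > 0 \<and>
     (\<forall>A A'. A \<subseteq> nbhd V E v \<longrightarrow> A' \<subseteq> nbhd V E v \<longrightarrow>
        \<bar>g A - g A'\<bar> \<le> K * real (card (A - A' \<union> (A' - A))) / real (deg V E v))"

definition sigma :: "nat \<Rightarrow> nat \<Rightarrow> 'a set \<Rightarrow> 'a \<Rightarrow> real" where
  "sigma p q T v = (if v \<in> T then real q else - real p)"

definition xi :: "'a set \<Rightarrow> ('a \<Rightarrow> 'a \<Rightarrow> bool) \<Rightarrow> nat \<Rightarrow> nat \<Rightarrow> nat \<Rightarrow> ('a \<Rightarrow> 'a set \<Rightarrow> real) \<Rightarrow> 'a set \<Rightarrow> real" where
  "xi V E n p q f T = (1 / (real p * real q * real n)) *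
     (\<Sum>v\<in>V. sigma p q T v * f v (T \<inter> nbhd V E v))"

definition unif_expect :: "'a set \<Rightarrow> nat \<Rightarrow> ('a set \<Rightarrow> real) \<Rightarrow> real" where
  "unif_expect V k F = (\<Sum>T\<in>{T. T \<subseteq> V \<and> card T = k}. F T) / real (card {T. T \<subseteq> V \<and> card T = k})"

end

theory Submission
  imports Defs
begin

lemma ins_bij:
  assumes "finite A" "u \<in> A"
  shows "bij_betw (insert u) {R. R \<subseteq> A - {u} \<and> card R = j} {S. S \<subseteq> A \<and> card S = Suc j \<and> u \<in> S}"
proof (rule bij_betw_byWitness[where f' = "\<lambda>S. S - {u}"])
  show "\<forall>R\<in>{R. R \<subseteq> A - {u} \<and> card R = j}. insert u R - {u} = R" by auto
  show "\<forall>S\<in>{S. S \<subseteq> A \<and> card S = Suc j \<and> u \<in> S}. insert u (S - {u}) = S" by auto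
  show "insert u ` {R. R \<subseteq> A - {u} \<and> card R = j} \<subseteq> {S. S \<subseteq> A \<and> card S = Suc j \<and> u \<in> S}"
  proof
    fix S assume "S \<in> insert u ` {R. R \<subseteq> A - {u} \<and> card R = j}"
    then obtain R where R: "R \<subseteq> A - {u}" "card R = j" "S = insert u R" by auto
    have "finite R" using R(1) assms(1) finite_subset by blast
    moreover have "u \<notin> R" using R(1) by auto
    ultimately show "S \<in> {S. S \<subseteq> A \<and> card S = Suc j \<and> u \<in> S}" using R assms by auto
  qed
  show "(\<lambda>S. S - {u}) ` {S. S \<subseteq> A \<and> card S = Suc j \<and> u \<in> S} \<subseteq> {R. R \<subseteq> A - {u} \<and> card R = j}"
  proof
    fix R assume "R \<in> (\<lambda>S. S - {u}) ` {S. S \<subseteq> A \<and> card S = Suc j \<and> u \<in> S}"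
    then obtain S where S: "S \<subseteq> A" "card S = Suc j" "u \<in> S" "R = S - {u}" by auto
    have "finite S" using S(1) assms(1) finite_subset by blast
    then show "R \<in> {R. R \<subseteq> A - {u} \<and> card R = j}" using S by auto
  qed
qed

lemma count_containing:
  assumes "finite A" "u \<in> A"
  shows "card {S. S \<subseteq> A \<and> card S = Suc j \<and> u \<in> S} = (card A - 1) choose j"
proof -
  have "card {S. S \<subseteq> A \<and> card S = Suc j \<and> u \<in> S} = card {R. R \<subseteq> A - {u} \<and> card R = j}"
    using bij_betw_same_card[OF ins_bij[OF assms]] by simp
  also have "\<dots> = card (A - {u}) choose j" using n_subsets assms by blast
  finally show ?thesis using assms by simp
qed

lemma double_count:
  assumes "finite W"
  shows "(\<Sum>S\<in>{S. S \<subseteq> W \<and> card S = Suc j}. \<Sum>u\<in>S. h (S - {u}))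
       = (\<Sum>R\<in>{R. R \<subseteq> W \<and> card R = j}. real (card W - j) * h R)"
proof -
  let ?A = "Sigma {R. R \<subseteq> W \<and> card R = j} (\<lambda>R. W - R)"
  let ?B = "Sigma {S. S \<subseteq> W \<and> card S = Suc j} (\<lambda>S. S)"
  have fin1: "finite {S. S \<subseteq> W \<and> card S = Suc j}" using assms by auto
  have fin2: "finite {R. R \<subseteq> W \<and> card R = j}" using assms by auto
  have bij: "bij_betw (\<lambda>(R,u). (insert u R, u)) ?A ?B"
  proof (rule bij_betw_byWitness[where f' = "\<lambda>(S,u). (S - {u}, u)"])
    show "\<forall>a\<in>?A. (\<lambda>(S, u). (S - {u}, u)) ((\<lambda>(R, u). (insert u R, u)) a) = a" by auto
    show "\<forall>a\<in>?B. (\<lambda>(R, u). (insert u R, u)) ((\<lambda>(S, u). (S - {u}, u)) a) = a" by auto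
    show "(\<lambda>(R, u). (insert u R, u)) ` ?A \<subseteq> ?B"
      using assms by (auto simp: card_insert_if finite_subset)
    show "(\<lambda>(S, u). (S - {u}, u)) ` ?B \<subseteq> ?A"
      using assms by (auto simp: finite_subset)
  qed
  have "(\<Sum>S\<in>{S. S \<subseteq> W \<and> card S = Suc j}. \<Sum>u\<in>S. h (S - {u})) = (\<Sum>(S,u)\<in>?B. h (S - {u}))"
    by (rule sum.Sigma) (use fin1 assms finite_subset in auto)
  also have "\<dots> = (\<Sum>x\<in>?A. (\<lambda>(S,u). h (S - {u})) ((\<lambda>(R,u). (insert u R, u)) x))"
    using sum.reindex_bij_betw[OF bij, symmetric] by blast
  also have "\<dots> = (\<Sum>(R,u)\<in>?A. h R)"
    by (rule sum.cong) auto
  also have "\<dots> = (\<Sum>R\<in>{R. R \<subseteq> W \<and> card R = j}. \<Sum>u\<in>W - R. h R)"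
    by (rule sum.Sigma[symmetric]) (use fin2 assms in auto)
  also have "\<dots> = (\<Sum>R\<in>{R. R \<subseteq> W \<and> card R = j}. real (card W - j) * h R)"
  proof (rule sum.cong)
    fix R assume "R \<in> {R. R \<subseteq> W \<and> card R = j}"
    then have "card (W - R) = card W - j" using assms by (auto simp: card_Diff_subset finite_subset)
    then show "(\<Sum>u\<in>W - R. h R) = real (card W - j) * h R" by simp
  qed simp
  finally show ?thesis .
qed

lemma indicator_count:
  assumes "finite W" "Nb \<subseteq> W"
  shows "(\<Sum>S\<in>{S. S \<subseteq> W \<and> card S = Suc j}. \<Sum>u\<in>S. (if u \<in> Nb then 1 else 0::real))
        = real (card Nb) * real ((card W - 1) choose j)"
proof -
  let ?F = "{S. S \<subseteq> W \<and> card S = Suc j}"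
  have "(\<Sum>S\<in>?F. \<Sum>u\<in>S. (if u \<in> Nb then 1 else 0::real))
      = (\<Sum>S\<in>?F. \<Sum>u\<in>W. (if u \<in> Nb \<and> u \<in> S then 1 else 0::real))"
  proof (rule sum.cong)
    fix S assume "S \<in> ?F"
    then have "S \<subseteq> W" by auto
    then show "(\<Sum>u\<in>S. (if u \<in> Nb then 1 else 0::real)) = (\<Sum>u\<in>W. (if u \<in> Nb \<and> u \<in> S then 1 else 0::real))"
      using assms(1) by (intro sum.mono_neutral_cong_left) auto
  qed simp
  also have "\<dots> = (\<Sum>u\<in>W. \<Sum>S\<in>?F. (if u \<in> Nb \<and> u \<in> S then 1 else 0::real))"
    by (rule sum.swap)
  also have "\<dots> = (\<Sum>u\<in>W. (if u \<in> Nb then real ((card W - 1) choose j) else 0))"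
  proof (rule sum.cong)
    fix u assume u: "u \<in> W"
    have "(\<Sum>S\<in>?F. (if u \<in> Nb \<and> u \<in> S then 1 else 0::real))
        = (if u \<in> Nb then real (card {S\<in>?F. u \<in> S}) else 0)"
      using assms(1) by (simp add: sum.If_cases Int_def conj_commute)
    also have "{S\<in>?F. u \<in> S} = {S. S \<subseteq> W \<and> card S = Suc j \<and> u \<in> S}" by auto
    finally show "(\<Sum>S\<in>?F. (if u \<in> Nb \<and> u \<in> S then 1 else 0::real))
        = (if u \<in> Nb then real ((card W - 1) choose j) else 0)"
      using count_containing[OF assms(1) u] by simp
  qed simp
  also have "\<dots> = real (card Nb) * real ((card W - 1) choose j)"
    using assms by (simp add: sum.If_cases Int_absorb1)
  finally show ?thesis .
qed

lemma vertex_bound: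
  fixes g :: "'a set \<Rightarrow> real"
  assumes fin: "finite W" and sub: "Nb \<subseteq> W" and dpos: "card Nb > 0"
    and lip: "\<forall>A A'. A \<subseteq> Nb \<longrightarrow> A' \<subseteq> Nb \<longrightarrow>
        \<bar>g A - g A'\<bar> \<le> K * real (card (A - A' \<union> (A' - A))) / real (card Nb)"
  shows "\<bar>real (card W - j) * (\<Sum>R\<in>{R. R \<subseteq> W \<and> card R = j}. g (R \<inter> Nb))
          - real (Suc j) * (\<Sum>S\<in>{S. S \<subseteq> W \<and> card S = Suc j}. g (S \<inter> Nb))\<bar>
         \<le> K * real ((card W - 1) choose j)"
proof -
  let ?F = "{S. S \<subseteq> W \<and> card S = Suc j}"
  let ?G = "{R. R \<subseteq> W \<and> card R = j}"
  let ?d = "real (card Nb)"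
  have K0: "K \<ge> 0"
  proof -
    have "\<bar>g Nb - g Nb\<bar> \<le> K * real (card (Nb - Nb \<union> (Nb - Nb))) / ?d" using lip by blast
    have "Nb \<noteq> {}" using dpos by auto
    then obtain x where x: "x \<in> Nb" by auto
    have "\<bar>g Nb - g (Nb - {x})\<bar> \<le> K * real (card (Nb - (Nb - {x}) \<union> ((Nb - {x}) - Nb))) / ?d"
      using lip by blast
    moreover have "Nb - (Nb - {x}) \<union> ((Nb - {x}) - Nb) = {x}" using x by auto
    ultimately have "0 \<le> K / ?d" by simp
    then show ?thesis using dpos by (simp add: zero_le_divide_iff)
  qed
  have e1: "(\<Sum>S\<in>?F. \<Sum>u\<in>S. g ((S - {u}) \<inter> Nb)) = (\<Sum>R\<in>?G. real (card W - j) * g (R \<inter> Nb))"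
    using double_count[OF fin, where j=j and h="\<lambda>R. g (R \<inter> Nb)"] by simp
  have e2: "(\<Sum>S\<in>?F. \<Sum>u\<in>S. g (S \<inter> Nb)) = (\<Sum>S\<in>?F. real (Suc j) * g (S \<inter> Nb))"
    by (rule sum.cong) auto
  have "real (card W - j) * (\<Sum>R\<in>?G. g (R \<inter> Nb)) - real (Suc j) * (\<Sum>S\<in>?F. g (S \<inter> Nb))
      = (\<Sum>S\<in>?F. \<Sum>u\<in>S. g ((S - {u}) \<inter> Nb) - g (S \<inter> Nb))"
    using e1 e2 by (simp add: sum_subtractf sum_distrib_left)
  also have "\<bar>\<dots>\<bar> \<le> (\<Sum>S\<in>?F. \<Sum>u\<in>S. \<bar>g ((S - {u}) \<inter> Nb) - g (S \<inter> Nb)\<bar>)"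
    by (rule order_trans[OF sum_abs]) (intro sum_mono sum_abs)
  also have "\<dots> \<le> (\<Sum>S\<in>?F. \<Sum>u\<in>S. K / ?d * (if u \<in> Nb then 1 else 0))"
  proof (intro sum_mono)
    fix S u assume S: "S \<in> ?F" and u: "u \<in> S"
    have "\<bar>g ((S - {u}) \<inter> Nb) - g (S \<inter> Nb)\<bar> \<le> K * real (card ((S - {u}) \<inter> Nb - S \<inter> Nb \<union> (S \<inter> Nb - (S - {u}) \<inter> Nb))) / ?d"
      using lip by blast
    moreover have "(S - {u}) \<inter> Nb - S \<inter> Nb \<union> (S \<inter> Nb - (S - {u}) \<inter> Nb) = (if u \<in> Nb then {u} else {})"
      using u by auto
    ultimately show "\<bar>g ((S - {u}) \<inter> Nb) - g (S \<inter> Nb)\<bar> \<le> K / ?d * (if u \<in> Nb then 1 else 0)"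
      by (auto split: if_splits)
  qed
  also have "\<dots> = K / ?d * (\<Sum>S\<in>?F. \<Sum>u\<in>S. (if u \<in> Nb then 1 else 0::real))"
    by (simp add: sum_distrib_left)
  also have "\<dots> = K * real ((card W - 1) choose j)"
    using indicator_count[OF fin sub, of j] dpos by simp
  finally show ?thesis .
qed

lemma vertex_sum:
  fixes g :: "'a set \<Rightarrow> real"
  assumes fin: "finite V" and v: "v \<in> V" and nv: "v \<notin> Nb"
  shows "(\<Sum>T\<in>{T. T \<subseteq> V \<and> card T = Suc j}. sigma p q T v * g (T \<inter> Nb))
       = real q * (\<Sum>R\<in>{R. R \<subseteq> V - {v} \<and> card R = j}. g (R \<inter> Nb))
         - real p * (\<Sum>S\<in>{S. S \<subseteq> V - {v} \<and> card S = Suc j}. g (S \<inter> Nb))"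
proof -
  let ?T = "{T. T \<subseteq> V \<and> card T = Suc j}"
  have finT: "finite ?T" using fin by auto
  have "(\<Sum>T\<in>?T. sigma p q T v * g (T \<inter> Nb))
      = (\<Sum>T\<in>{T\<in>?T. v \<in> T}. sigma p q T v * g (T \<inter> Nb)) + (\<Sum>T\<in>{T\<in>?T. v \<notin> T}. sigma p q T v * g (T \<inter> Nb))"
  proof -
    have e: "?T = {T\<in>?T. v \<in> T} \<union> {T\<in>?T. v \<notin> T}" by auto
    show ?thesis by (subst e, rule sum.union_disjoint) (use fin in auto)
  qed
  also have "(\<Sum>T\<in>{T\<in>?T. v \<in> T}. sigma p q T v * g (T \<inter> Nb)) = (\<Sum>T\<in>{T. T \<subseteq> V \<and> card T = Suc j \<and> v \<in> T}. real q * g (T \<inter> Nb))"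
    by (rule sum.cong) (auto simp: sigma_def)
  also have "\<dots> = (\<Sum>R\<in>{R. R \<subseteq> V - {v} \<and> card R = j}. real q * g (insert v R \<inter> Nb))"
    using sum.reindex_bij_betw[OF ins_bij[OF fin v, of j], of "\<lambda>T. real q * g (T \<inter> Nb)"] by simp
  also have "\<dots> = real q * (\<Sum>R\<in>{R. R \<subseteq> V - {v} \<and> card R = j}. g (R \<inter> Nb))"
    using nv by (simp add: sum_distrib_left)
  also have "{T\<in>?T. v \<notin> T} = {S. S \<subseteq> V - {v} \<and> card S = Suc j}" by auto
  also have "(\<Sum>T\<in>{S. S \<subseteq> V - {v} \<and> card S = Suc j}. sigma p q T v * g (T \<inter> Nb))
       = - real p * (\<Sum>S\<in>{S. S \<subseteq> V - {v} \<and> card S = Suc j}. g (S \<inter> Nb))"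
    by (simp add: sum_distrib_left, rule sum.cong) (auto simp: sigma_def)
  finally show ?thesis by simp
qed

theorem mainTheorem13:
  fixes V :: "'a set" and E :: "'a \<Rightarrow> 'a \<Rightarrow> bool" and n p q :: nat
    and f :: "'a \<Rightarrow> 'a set \<Rightarrow> real" and K :: "'a \<Rightarrow> real"
  assumes "n > 0" and "p > 0" and "q > 0"
    and "simple_graph V E"
    and "card V = (p + q) * n"
    and "\<forall>v\<in>V. nbhd V E v \<noteq> {}"
    and "\<forall>v\<in>V. f v {} = 0"
    and "\<forall>v\<in>V. lipschitz_loc V E v (f v) (K v)"
  shows "\<bar>unif_expect V (p * n) (xi V E n p q f)\<bar>
           \<le> ((\<Sum>v\<in>V. K v) / real ((p + q) * n)) / (real ((p + q) * n) - 1)"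
proof -
  note a = assms
  define N where "N = (p + q) * n"
  obtain j where j: "p * n = Suc j" using a(1,2) by (metis gr0_implies_Suc nat_0_less_mult_iff)
  have fin: "finite V" using a(4) by (simp add: simple_graph_def)
  have cV: "card V = N" using a(5) N_def by simp
  have qn: "q * n \<ge> 1" using a(1,3) by simp
  have NW: "N - 1 - j = q * n" using j N_def by (simp add: algebra_simps)
  have NS: "N = Suc j + q * n" using j N_def by (simp add: algebra_simps)
  have jle: "j \<le> N - 2" using NS qn by linarith
  define c where "c = (N - 2) choose j"
  define t where "t = N choose Suc j"
  have bin: "Suc j * (N - 1 - j) * t = N * (N - 1) * c"
  proof -
    have "Suc j * t = N * ((N - 1) choose j)" unfolding t_def by (rule binomial_absorption)
    moreover have "(N - 1 - j) * ((N - 1) choose j) = (N - 1) * (N - 1 - 1 choose j)"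
      by (rule binomial_absorb_comp)
    ultimately show ?thesis unfolding c_def
      by (metis (no_types, lifting) diff_diff_left mult.assoc mult.commute one_add_one)
  qed
  have tpos: "t > 0" unfolding t_def using NS by simp
  have cpos: "c > 0" unfolding c_def using jle by simp
  define X where "X v = (\<Sum>R\<in>{R. R \<subseteq> V - {v} \<and> card R = j}. f v (R \<inter> nbhd V E v))" for v
  define Y where "Y v = (\<Sum>S\<in>{S. S \<subseteq> V - {v} \<and> card S = Suc j}. f v (S \<inter> nbhd V E v))" for v
  have per: "\<bar>real q * X v - real p * Y v\<bar> \<le> K v * real c / real n" if v: "v \<in> V" for v
  proof -
    let ?Nb = "nbhd V E v"
    have sub: "?Nb \<subseteq> V - {v}" using a(4) by (auto simp: nbhd_def simple_graph_def)
    have finN: "finite ?Nb" using fin by (simp add: nbhd_def)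
    have dpos: "card ?Nb > 0" using a(6) v finN by (simp add: card_gt_0_iff)
    have lip: "\<forall>A A'. A \<subseteq> ?Nb \<longrightarrow> A' \<subseteq> ?Nb \<longrightarrow>
        \<bar>f v A - f v A'\<bar> \<le> K v * real (card (A - A' \<union> (A' - A))) / real (card ?Nb)"
      using a(8) v by (simp add: lipschitz_loc_def deg_def)
    have cW: "card (V - {v}) = N - 1" using cV v fin by simp
    note vb = vertex_bound[OF _ sub dpos lip, of j]
    have "\<bar>real (q * n) * X v - real (Suc j) * Y v\<bar> \<le> K v * real c"
      using vb fin cW NW unfolding X_def Y_def c_def by (simp add: diff_diff_left numeral_2_eq_2)
    moreover have "real (Suc j) = real p * real n" using j by (metis of_nat_mult)
    moreover have "real (q * n) = real q * real n" by simp
    ultimately have "\<bar>real n * (real q * X v - real p * Y v)\<bar> \<le> K v * real c"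
      by (simp only:) (simp add: algebra_simps)
    then have "real n * \<bar>real q * X v - real p * Y v\<bar> \<le> K v * real c"
      by (simp add: abs_mult)
    then show ?thesis using a(1) by (simp add: field_simps)
  qed
  let ?T = "{T. T \<subseteq> V \<and> card T = p * n}"
  have sumT: "(\<Sum>T\<in>?T. xi V E n p q f T) = (1 / (real p * real q * real n)) * (\<Sum>v\<in>V. real q * X v - real p * Y v)"
  proof -
    have "(\<Sum>T\<in>?T. xi V E n p q f T) = (1 / (real p * real q * real n)) * (\<Sum>v\<in>V. \<Sum>T\<in>?T. sigma p q T v * f v (T \<inter> nbhd V E v))"
      unfolding xi_def by (simp add: sum_distrib_left sum.swap[of _ ?T V])
    also have "(\<Sum>v\<in>V. \<Sum>T\<in>?T. sigma p q T v * f v (T \<inter> nbhd V E v)) = (\<Sum>v\<in>V. real q * X v - real p * Y v)"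
    proof (rule sum.cong)
      fix v assume v: "v \<in> V"
      have nv: "v \<notin> nbhd V E v" using a(4) by (simp add: nbhd_def simple_graph_def)
      show "(\<Sum>T\<in>?T. sigma p q T v * f v (T \<inter> nbhd V E v)) = real q * X v - real p * Y v"
        unfolding j X_def Y_def by (rule vertex_sum[OF fin v nv])
    qed simp
    finally show ?thesis .
  qed
  have cT: "card ?T = t" unfolding t_def using n_subsets[OF fin] cV j by simp
  have "\<bar>unif_expect V (p * n) (xi V E n p q f)\<bar> = \<bar>\<Sum>v\<in>V. real q * X v - real p * Y v\<bar> / (real p * real q * real n * real t)"
    unfolding unif_expect_def sumT cT using a(1,2,3) tpos by (simp add: abs_mult abs_divide)
  also have "\<dots> \<le> (\<Sum>v\<in>V. K v * real c / real n) / (real p * real q * real n * real t)"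
    using a(1,2,3) tpos per by (intro divide_right_mono order_trans[OF sum_abs] sum_mono) auto
  also have "\<dots> = (\<Sum>v\<in>V. K v) * real c / (real (p * n) * real (q * n) * real t)"
    using a(1) by (simp add: sum_divide_distrib[symmetric] sum_distrib_right[symmetric] field_simps)
  also have "\<dots> = (\<Sum>v\<in>V. K v) / (real N * (real N - 1))"
  proof -
    have b2: "(p * n) * (q * n) * t = N * (N - 1) * c" using bin NW j by simp
    have r1: "real (N - 1) = real N - 1" using NS by simp
    have "real ((p * n) * (q * n) * t) = real (N * (N - 1) * c)" using b2 by simp
    then have e: "real (p * n) * real (q * n) * real t = real N * (real N - 1) * real c"
      by (simp only: of_nat_mult r1)
    show ?thesis unfolding e using cpos by simp
  qed
  finally show ?thesis unfolding N_def by simp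
qed

end
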